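(* Fix $\sigma\in(0,\tfrac12)$. There exist $\lambda^{*}>0$ and $s^{*}\in(0,1)$ such that: (i) for all $\lambda\in(0,\lambda^{*})$, $\mathcal{I}^1_\lambda=(0,1)$; (ii) for $\lambda=\lambda^{*}$, $\mathcal{I}^1_\lambda=(0,1)\setminus\{s^{*}\}$; (iii) for all $\lambda>\lambda^{*}$ there exist $s_0,s_1\in(0,1)$ with $s_0<s^{*}<s_1$ such that $\mathcal{I}^1_\lambda=(0,s_0)\cup(s_1,1)$.
   Context: Let $g(s)=s^2(1-s)$ and $G(u)=u^3/3-u^4/4$ on $[0,1]$. For $\lambda>0$ and $s\in(0,1)$, let $(\hat u_s,\hat v_s)$ be the unique solution, on its maximal interval of existence, of $u'=v$, $v'=-\lambda g(u)$, $u(1)=s$, $v(1)=0$. Let $\hat T_0(s)$ denote the time taken by $(\hat u_s,\hat v_s)$ to go from $(s,0)$ to the half-line $\{0\}\times(0,+\infty)$ moving backwards in time along the level line $v^2+2\lambda G(u)=2\lambda G(s)$. Set $\mathcal{I}^1_\lambda=\{s\in(0,1):\hat T_0(s)>\sigma\}$. *)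

theory Defs
  imports "HOL-Analysis.Analysis"
begin

definition g :: "real \<Rightarrow> real" where
  "g s = s^2 * (1 - s)"

definition G :: "real \<Rightarrow> real" where
  "G u = u^3 / 3 - u^4 / 4"

text \<open>The time taken by the solution of u' = v, v' = -lam g(u), u(1) = s, v(1) = 0,
  moving backwards in time from (s,0), to reach the half-line {0} x (0,+inf):
  the (unique) tau > 0 such that the solution exists on [1-tau,1], lies on
  the half-line at time 1-tau, and does not meet it at times in (1-tau,1].\<close>
definition T0hat :: "real \<Rightarrow> real \<Rightarrow> real" where
  "T0hat lam s = (THE tau. tau > 0 \<and>
     (\<exists>u v :: real \<Rightarrow> real.
        (\<forall>t\<in>{1-tau..1}. (u has_real_derivative v t) (at t within {1-tau..1}) \<and>
                          (v has_real_derivative (- lam * g (u t))) (at t within {1-tau..1})) \<and>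
        u 1 = s \<and> v 1 = 0 \<and>
        u (1 - tau) = 0 \<and> v (1 - tau) > 0 \<and>
        (\<forall>t\<in>{1-tau<..1}. \<not> (u t = 0 \<and> v t > 0))))"

definition I1 :: "real \<Rightarrow> real \<Rightarrow> real set" where
  "I1 sg lam = {s \<in> {0<..<1}. T0hat lam s > sg}"

end

theory Submission
  imports Defs
begin

definition aa :: "real \<Rightarrow> real" where "aa x = (1 + x + x^2) / 3"
definition bb :: "real \<Rightarrow> real" where "bb x = (1 + x + x^2 + x^3) / 4"
definition P :: "real \<Rightarrow> real \<Rightarrow> real" where
  "P s z = s * aa (1 - z^2) - s^2 * bb (1 - z^2)"
definition Pd :: "real \<Rightarrow> real \<Rightarrow> real" where
  "Pd s z = -2 * z * (s * (1 + 2 * (1 - z^2)) / 3 - s^2 * (1 + 2 * (1 - z^2) + 3 * (1 - z^2)^2) / 4)"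

lemma aa_bb: "aa x - bb x = (1 - x) * (3 * x^2 + 2 * x + 1) / 12"
  unfolding aa_def bb_def by (simp add: field_simps power2_eq_square power3_eq_cube)

lemma P_pos: assumes "0 < s" "s < 1" shows "P s z > 0"
proof -
  define x where "x = 1 - z^2"
  have x1: "x \<le> 1" unfolding x_def by simp
  have "3 * x^2 + 2 * x + 1 = 3 * (x + 1/3)^2 + 2/3" by (simp add: power2_eq_square field_simps)
  then have q: "3 * x^2 + 2 * x + 1 > 0" by (metis add_nonneg_pos mult_nonneg_nonneg zero_le_power2 zero_less_divide_iff zero_le_numeral zero_less_numeral)
  have "aa x - s * bb x > 0"
  proof (cases "bb x \<le> 0")
    case True
    have "1 + x + x^2 = (x + 1/2)^2 + 3/4" by (simp add: power2_eq_square field_simps)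
    then have "aa x > 0" unfolding aa_def by (metis add_nonneg_pos zero_le_power2 zero_less_divide_iff zero_less_numeral)
    moreover have "s * bb x \<le> 0" using True assms by (simp add: mult_nonneg_nonpos)
    ultimately show ?thesis by linarith
  next
    case False
    have "(1 - x) * (3 * x^2 + 2 * x + 1) \<ge> 0" using x1 q by simp
    then have "aa x - bb x \<ge> 0" using aa_bb[of x] by simp
    moreover have "(1 - s) * bb x > 0" using False assms by simp
    ultimately show ?thesis by (simp add: algebra_simps)
  qed
  then have "s * (aa x - s * bb x) > 0" using assms by simp
  then show ?thesis unfolding P_def x_def[symmetric]
    by (simp add: power2_eq_square algebra_simps)
qed

lemma G_ident: "G s - G (s * (1 - z^2)) = s^2 * z^2 * P s z"
  unfolding G_def P_def aa_def bb_def by (simp add: field_simps) algebra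

lemma g_ident: "g (s * (1 - z^2)) = s * (P s z + z * Pd s z / 2)"
  unfolding g_def P_def Pd_def aa_def bb_def by (simp add: field_simps) algebra

lemma P_deriv: "((\<lambda>z. P s z) has_real_derivative Pd s z) (at z)"
  unfolding P_def Pd_def aa_def bb_def
  by (rule derivative_eq_intros refl | simp)+ (simp add: field_simps; algebra)


lemma g_lip:
  assumes "\<bar>x\<bar> \<le> M" "\<bar>y\<bar> \<le> M"
  shows "\<bar>g x - g y\<bar> \<le> (2 * M + 3 * M^2) * \<bar>x - y\<bar>"
proof -
  have e: "g x - g y = (x - y) * ((x + y) - (x^2 + x*y + y^2))"
    unfolding g_def by (simp add: power2_eq_square power3_eq_cube algebra_simps)
  have M0: "M \<ge> 0" using assms by linarith
  have "\<bar>x*y\<bar> \<le> M^2" using assms by (simp add: abs_mult power2_eq_square mult_mono M0)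
  moreover have "\<bar>x^2\<bar> \<le> M^2" using power_mono[OF assms(1) abs_ge_zero, of 2] by simp
  moreover have "\<bar>y^2\<bar> \<le> M^2" using power_mono[OF assms(2) abs_ge_zero, of 2] by simp
  ultimately have "\<bar>(x + y) - (x^2 + x*y + y^2)\<bar> \<le> 2 * M + 3 * M^2" using assms by linarith
  then show ?thesis unfolding e abs_mult
    by (simp add: mult.commute mult_left_mono)
qed

lemma ode_unique:
  fixes u1 v1 u2 v2 :: "real \<Rightarrow> real"
  assumes ab: "a \<le> b" and lam: "lam > 0"
  and d1: "\<forall>t\<in>{a..b}. (u1 has_real_derivative v1 t) (at t within {a..b}) \<and>
            (v1 has_real_derivative (- lam * g (u1 t))) (at t within {a..b})"
  and d2: "\<forall>t\<in>{a..b}. (u2 has_real_derivative v2 t) (at t within {a..b}) \<and>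
            (v2 has_real_derivative (- lam * g (u2 t))) (at t within {a..b})"
  and eb: "u1 b = u2 b" "v1 b = v2 b"
  shows "\<forall>t\<in>{a..b}. u1 t = u2 t \<and> v1 t = v2 t"
proof -
  have cu1: "continuous_on {a..b} u1" by (rule DERIV_continuous_on) (use d1 in blast)
  have cu2: "continuous_on {a..b} u2" by (rule DERIV_continuous_on) (use d2 in blast)
  have cv1: "continuous_on {a..b} v1" by (rule DERIV_continuous_on) (use d1 in blast)
  have cv2: "continuous_on {a..b} v2" by (rule DERIV_continuous_on) (use d2 in blast)
  obtain M1 where M1: "\<forall>t\<in>{a..b}. \<bar>u1 t\<bar> \<le> M1"
    using compact_imp_bounded[OF compact_continuous_image[OF cu1 compact_Icc]]
    unfolding bounded_real by auto
  obtain M2 where M2: "\<forall>t\<in>{a..b}. \<bar>u2 t\<bar> \<le> M2"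
    using compact_imp_bounded[OF compact_continuous_image[OF cu2 compact_Icc]]
    unfolding bounded_real by auto
  define M where "M = \<bar>M1\<bar> + \<bar>M2\<bar>"
  define L where "L = 2 * M + 3 * M^2"
  have L0: "L \<ge> 0" unfolding L_def M_def by simp
  define C where "C = 1 + lam * L"
  define D where "D t = (u1 t - u2 t)^2 + (v1 t - v2 t)^2" for t
  define E where "E t = D t * exp (C * t)" for t
  have cE: "continuous_on {a..b} E" unfolding E_def D_def
    by (intro continuous_intros cu1 cu2 cv1 cv2)
  have Eb: "E b = 0" unfolding E_def D_def using eb by simp
  show ?thesis
  proof
    fix t assume t: "t \<in> {a..b}"
    have "E t \<le> E b"
    proof (rule DERIV_nonneg_imp_increasing_open[where f=E])
      show "t \<le> b" using t by simp
      show "continuous_on {t..b} E" using t by (intro continuous_on_subset[OF cE]) auto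
    next
      fix x assume x: "t < x" "x < b"
      then have xab: "x \<in> {a..b}" using t by auto
      have atx: "at x within {a..b} = at x" using x t by (intro at_within_Icc_at) auto
      have du1: "(u1 has_real_derivative v1 x) (at x)" using d1[rule_format, OF xab] atx by simp
      have du2: "(u2 has_real_derivative v2 x) (at x)" using d2[rule_format, OF xab] atx by simp
      have dv1: "(v1 has_real_derivative (- lam * g (u1 x))) (at x)" using d1[rule_format, OF xab] atx by simp
      have dv2: "(v2 has_real_derivative (- lam * g (u2 x))) (at x)" using d2[rule_format, OF xab] atx by simp
      define du where "du = u1 x - u2 x"
      define dv where "dv = v1 x - v2 x"
      define dg where "dg = g (u1 x) - g (u2 x)"
      define D' where "D' = 2 * du * dv - 2 * lam * dv * dg"
      have dD: "(D has_real_derivative D') (at x)"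
      proof -
        have hu: "((\<lambda>t. u1 t - u2 t) has_real_derivative v1 x - v2 x) (at x)"
          using DERIV_diff[OF du1 du2] .
        have hv: "((\<lambda>t. v1 t - v2 t) has_real_derivative (- lam * g (u1 x)) - (- lam * g (u2 x))) (at x)"
          using DERIV_diff[OF dv1 dv2] .
        have "((\<lambda>t. (u1 t - u2 t)^2 + (v1 t - v2 t)^2) has_real_derivative
           (of_nat 2 * ((v1 x - v2 x) * (u1 x - u2 x) ^ (2 - Suc 0)) + of_nat 2 * (((- lam * g (u1 x)) - (- lam * g (u2 x))) * (v1 x - v2 x) ^ (2 - Suc 0)))) (at x)"
          by (rule DERIV_add[OF DERIV_power[OF hu] DERIV_power[OF hv]])
        then show ?thesis unfolding D_def[abs_def] D'_def du_def dv_def dg_def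
          by (simp add: algebra_simps)
      qed
      have dE: "(E has_real_derivative (D' * exp (C * x) + D x * (C * exp (C * x)))) (at x)"
      proof -
        have dex: "((\<lambda>t. exp (C*t)) has_real_derivative exp (C*x) * C) (at x)"
          by (intro derivative_eq_intros) auto
        show ?thesis unfolding E_def[abs_def] using DERIV_mult'[OF dD dex] by (simp add: algebra_simps)
      qed
      have lip: "\<bar>dg\<bar> \<le> L * \<bar>du\<bar>" unfolding dg_def du_def L_def
      proof (intro g_lip)
        show "\<bar>u1 x\<bar> \<le> M" using M1[rule_format, OF xab] unfolding M_def by linarith
        show "\<bar>u2 x\<bar> \<le> M" using M2[rule_format, OF xab] unfolding M_def by linarith
      qed
      have Dx: "D x = du^2 + dv^2" unfolding D_def du_def dv_def by simp
      have h1: "\<bar>2 * du * dv\<bar> \<le> du^2 + dv^2"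
      proof -
        have "0 \<le> (\<bar>du\<bar> - \<bar>dv\<bar>)^2" by simp
        then show ?thesis by (simp add: power2_eq_square abs_mult algebra_simps)
      qed
      have "\<bar>2 * lam * dv * dg\<bar> \<le> 2 * lam * \<bar>dv\<bar> * (L * \<bar>du\<bar>)"
        using lip lam by (simp add: abs_mult mult_left_mono)
      also have "\<dots> = lam * L * \<bar>2 * du * dv\<bar>" by (simp add: abs_mult algebra_simps)
      also have "\<dots> \<le> lam * L * (du^2 + dv^2)" using h1 lam L0 by (simp add: mult_left_mono)
      finally have h2: "\<bar>2 * lam * dv * dg\<bar> \<le> lam * L * (du^2 + dv^2)" .
      have "D' + C * D x \<ge> 0" 
      proof -
        have "D' \<ge> - (du^2 + dv^2) - lam * L * (du^2 + dv^2)" unfolding D'_def using h1 h2 by linarith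
        then show ?thesis unfolding C_def Dx by (simp add: algebra_simps)
      qed
      then have "(D' + C * D x) * exp (C * x) \<ge> 0" by simp
      then show "\<exists>y. (E has_real_derivative y) (at x) \<and> 0 \<le> y"
        using dE by (intro exI[of _ "D' * exp (C * x) + D x * (C * exp (C * x))"]) (simp add: algebra_simps)
    qed
    then have "E t \<le> 0" using Eb by simp
    moreover have "E t \<ge> 0" unfolding E_def D_def by simp
    ultimately have "D t = 0" unfolding E_def by simp
    then show "u1 t = u2 t \<and> v1 t = v2 t" unfolding D_def
      by (simp add: add_nonneg_eq_0_iff)
  qed
qed


definition FF :: "real \<Rightarrow> real \<Rightarrow> real \<Rightarrow> real" where
  "FF lam s z = sqrt (lam * P s z / 2)"
definition ff :: "real \<Rightarrow> real \<Rightarrow> real \<Rightarrow> real" where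
  "ff lam s z = 1 / FF lam s z"
definition Th :: "real \<Rightarrow> real \<Rightarrow> real \<Rightarrow> real" where
  "Th lam s z = integral {-1..z} (ff lam s)"
definition Zf :: "real \<Rightarrow> real \<Rightarrow> real \<Rightarrow> real" where
  "Zf lam s y = the_inv_into {-1..2} (Th lam s) y"
definition TT :: "real \<Rightarrow> real \<Rightarrow> real" where
  "TT lam s = Th lam s 1 - Th lam s 0"
definition zt :: "real \<Rightarrow> real \<Rightarrow> real \<Rightarrow> real" where
  "zt lam s t = Zf lam s (Th lam s 0 + 1 - t)"
definition usol :: "real \<Rightarrow> real \<Rightarrow> real \<Rightarrow> real" where
  "usol lam s t = s * (1 - (zt lam s t)^2)"
definition vsol :: "real \<Rightarrow> real \<Rightarrow> real \<Rightarrow> real" where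
  "vsol lam s t = 2 * s * zt lam s t * FF lam s (zt lam s t)"

definition hh :: "real \<Rightarrow> real \<Rightarrow> real" where
  "hh s z = sqrt 2 / sqrt (P s z)"
definition tauf :: "real \<Rightarrow> real" where
  "tauf s = integral {0..1} (hh s)"

lemma P_cont: "continuous_on S (P s)"
  unfolding P_def aa_def bb_def by (intro continuous_intros) auto

context
  fixes lam s :: real
  assumes lam: "lam > 0" and s0: "0 < s" and s1: "s < 1"
begin

lemma FF_pos: "FF lam s z > 0"
  unfolding FF_def using P_pos[OF s0 s1] lam by simp

lemma ff_pos: "ff lam s z > 0"
  unfolding ff_def using FF_pos by simp

lemma ff_cont: "continuous_on S (ff lam s)"
proof -
  have "continuous_on S (\<lambda>z. 1 / sqrt (lam * P s z / 2))"
  proof -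
    have nz: "\<And>z. sqrt (lam * P s z / 2) \<noteq> 0" using FF_pos unfolding FF_def by (metis less_irrefl)
    show ?thesis by (intro continuous_intros P_cont) (use nz in auto)
  qed
  then show ?thesis unfolding ff_def FF_def by (simp add: o_def)
qed

lemma FF_sq: "(FF lam s z)^2 = lam * P s z / 2"
  unfolding FF_def using P_pos[OF s0 s1, of z] lam by simp

lemma FF_deriv: "(FF lam s has_real_derivative lam * Pd s z / (4 * FF lam s z)) (at z)"
proof -
  have d1: "((\<lambda>z. lam * P s z / 2) has_real_derivative lam * Pd s z / 2) (at z)"
    using DERIV_cdivide[OF DERIV_cmult[OF P_deriv[of s z], of lam], of 2] by simp
  have d2: "(sqrt has_real_derivative inverse (sqrt (lam * P s z / 2)) / 2) (at (lam * P s z / 2))"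
    using P_pos[OF s0 s1, of z] lam by (intro DERIV_real_sqrt) simp
  have "((\<lambda>z. sqrt (lam * P s z / 2)) has_real_derivative
          inverse (sqrt (lam * P s z / 2)) / 2 * (lam * Pd s z / 2)) (at z)"
    using DERIV_chain2[OF d2 d1] .
  then show ?thesis by (simp add: field_simps FF_def[abs_def])
qed

lemma ff_eq: "ff lam s z = hh s z / sqrt lam"
  unfolding ff_def FF_def hh_def using P_pos[OF s0 s1, of z] lam
  by (simp add: real_sqrt_divide real_sqrt_mult field_simps)

lemma Th_deriv: "-1 < z \<Longrightarrow> z < 2 \<Longrightarrow> (Th lam s has_real_derivative ff lam s z) (at z)"
proof -
  assume z: "-1 < z" "z < 2"
  have "(Th lam s has_real_derivative ff lam s z) (at z within {-1..2})"
    unfolding Th_def[abs_def] using z by (intro integral_has_real_derivative ff_cont) auto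
  then show ?thesis using at_within_Icc_at[of "-1" z 2] z by simp
qed

lemma Th_cont: "continuous_on {-1..2} (Th lam s)"
  by (rule DERIV_continuous_on[where D="ff lam s"])
     (unfold Th_def[abs_def], intro integral_has_real_derivative ff_cont, auto)

lemma Th_less: assumes "-1 \<le> x" "x < y" "y \<le> 2" shows "Th lam s x < Th lam s y"
proof (rule DERIV_pos_imp_increasing_open[where f="Th lam s"])
  show "x < y" by fact
  show "continuous_on {x..y} (Th lam s)" using assms by (intro continuous_on_subset[OF Th_cont]) auto
  fix t assume "x < t" "t < y"
  then show "\<exists>d. (Th lam s has_real_derivative d) (at t) \<and> 0 < d"
    using assms Th_deriv ff_pos by (intro exI[of _ "ff lam s t"]) auto
qed

lemma Th_le_iff: "x \<in> {-1..2} \<Longrightarrow> y \<in> {-1..2} \<Longrightarrow> Th lam s x \<le> Th lam s y \<longleftrightarrow> x \<le> y"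
  using Th_less[of x y] Th_less[of y x] by (cases "x = y") (auto simp: not_le[symmetric])

lemma Th_inj: "inj_on (Th lam s) {-1..2}"
proof (rule inj_onI)
  fix x y assume "x \<in> {-1..2}" "y \<in> {-1..2}" "Th lam s x = Th lam s y"
  then show "x = y" using Th_le_iff[of x y] Th_le_iff[of y x] by auto
qed

lemma Zf_Th: "z \<in> {-1..2} \<Longrightarrow> Zf lam s (Th lam s z) = z"
  unfolding Zf_def by (rule the_inv_into_f_f[OF Th_inj])

lemma Th_Zf: assumes "y \<in> {Th lam s (-1)..Th lam s 2}"
  shows "Th lam s (Zf lam s y) = y" "Zf lam s y \<in> {-1..2}"
proof -
  obtain z where z: "-1 \<le> z" "z \<le> 2" "Th lam s z = y"
    using IVT'[of "Th lam s" "-1" y 2] assms Th_cont by auto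
  then show "Th lam s (Zf lam s y) = y" "Zf lam s y \<in> {-1..2}" using Zf_Th[of z] by auto
qed

lemma Zf_range: assumes "y \<in> {Th lam s 0..Th lam s 1}"
  shows "Zf lam s y \<in> {0..1}"
proof -
  have y: "y \<in> {Th lam s (-1)..Th lam s 2}"
    using assms Th_le_iff[of "-1" 0] Th_le_iff[of 1 2] by auto
  have "Th lam s 0 \<le> Th lam s (Zf lam s y)" "Th lam s (Zf lam s y) \<le> Th lam s 1"
    using Th_Zf[OF y] assms by auto
  then show ?thesis using Th_le_iff Th_Zf(2)[OF y] by auto
qed

lemma Zf_deriv: assumes "y \<in> {Th lam s 0..Th lam s 1}"
  shows "(Zf lam s has_real_derivative FF lam s (Zf lam s y)) (at y)"
proof -
  have y: "y \<in> {Th lam s (-1)..Th lam s 2}"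
    using assms Th_le_iff[of "-1" 0] Th_le_iff[of 1 2] by auto
  define z where "z = Zf lam s y"
  have z01: "z \<in> {0..1}" unfolding z_def by (rule Zf_range[OF assms])
  have Thz: "Th lam s z = y" unfolding z_def by (rule Th_Zf(1)[OF y])
  have cont: "isCont (Zf lam s) y"
  proof -
    have "isCont (Zf lam s) (Th lam s z)"
    proof (rule isCont_inverse_function2[where a="-1/2" and b="3/2" and f="Th lam s" and g="Zf lam s" and x=z])
      show "-1/2 < z" "z < 3/2" using z01 by auto
      fix w :: real assume w: "-1/2 \<le> w" "w \<le> 3/2"
      then show "Zf lam s (Th lam s w) = w" by (intro Zf_Th) auto
      show "isCont (Th lam s) w" using Th_deriv[of w] w by (intro DERIV_isCont) auto
    qed
    then show ?thesis using Thz by simp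
  qed
  have "(Zf lam s has_real_derivative inverse (ff lam s z)) (at y)"
  proof (rule DERIV_inverse_function[where f="Th lam s" and a="Th lam s (-1/2)" and b="Th lam s (3/2)"])
    show "(Th lam s has_real_derivative ff lam s z) (at (Zf lam s y))"
      unfolding z_def[symmetric] using z01 by (intro Th_deriv) auto
    show "ff lam s z \<noteq> 0" using ff_pos by (metis less_irrefl)
    show "Th lam s (-1/2) < y" "y < Th lam s (3/2)"
      using Thz z01 Th_less[of "-1/2" z] Th_less[of z "3/2"] by auto
    fix w assume "Th lam s (-1/2) < w" "w < Th lam s (3/2)"
    then have "w \<in> {Th lam s (-1)..Th lam s 2}"
      using Th_less[of "-1" "-1/2"] Th_less[of "3/2" 2] by auto
    then show "Th lam s (Zf lam s w) = w" by (rule Th_Zf(1))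
  next
    show "isCont (Zf lam s) y" by (rule cont)
  qed
  then show ?thesis unfolding z_def ff_def using FF_pos by simp
qed

end


context
  fixes lam s :: real
  assumes lam: "lam > 0" and s0: "0 < s" and s1: "s < 1"
begin

lemma TT_pos: "TT lam s > 0"
  unfolding TT_def using Th_less[OF lam s0 s1, of 0 1] by simp

lemma zt_y: "t \<in> {1 - TT lam s..1} \<Longrightarrow> Th lam s 0 + 1 - t \<in> {Th lam s 0..Th lam s 1}"
  unfolding TT_def by auto

lemma zt_range: "t \<in> {1 - TT lam s..1} \<Longrightarrow> zt lam s t \<in> {0..1}"
  unfolding zt_def using Zf_range[OF lam s0 s1 zt_y] by simp

lemma zt_1: "zt lam s 1 = 0"
  unfolding zt_def using Zf_Th[OF lam s0 s1, of 0] by simp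

lemma zt_end: "zt lam s (1 - TT lam s) = 1"
  unfolding zt_def TT_def using Zf_Th[OF lam s0 s1, of 1] by simp

lemma zt_lt1: assumes "t \<in> {1 - TT lam s<..1}" shows "zt lam s t < 1"
proof -
  have t: "t \<in> {1 - TT lam s..1}" using assms by auto
  have y: "Th lam s 0 + 1 - t \<in> {Th lam s (-1)..Th lam s 2}"
    using zt_y[OF t] Th_le_iff[OF lam s0 s1, of "-1" 0] Th_le_iff[OF lam s0 s1, of 1 2] by auto
  have "Th lam s (zt lam s t) = Th lam s 0 + 1 - t" unfolding zt_def by (rule Th_Zf(1)[OF lam s0 s1 y])
  moreover have "Th lam s 0 + 1 - t < Th lam s 1" using assms unfolding TT_def by auto
  ultimately show ?thesis using zt_range[OF t] by (cases "zt lam s t = 1") auto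
qed

lemma zt_deriv: assumes "t \<in> {1 - TT lam s..1}"
  shows "(zt lam s has_real_derivative - FF lam s (zt lam s t)) (at t)"
proof -
  have d1: "((\<lambda>t. Th lam s 0 + 1 - t) has_real_derivative -1) (at t)"
    by (intro derivative_eq_intros) auto
  have "((\<lambda>t. Zf lam s (Th lam s 0 + 1 - t)) has_real_derivative FF lam s (Zf lam s (Th lam s 0 + 1 - t)) * -1) (at t)"
    by (rule DERIV_chain2[OF Zf_deriv[OF lam s0 s1 zt_y[OF assms]] d1])
  then show ?thesis unfolding zt_def[abs_def] by simp
qed

lemma usol_deriv: assumes "t \<in> {1 - TT lam s..1}"
  shows "(usol lam s has_real_derivative vsol lam s t) (at t)"
proof -
  have "((\<lambda>t. s * (1 - (zt lam s t)^2)) has_real_derivative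
      s * (0 - of_nat 2 * (- FF lam s (zt lam s t) * (zt lam s t) ^ (2 - Suc 0)))) (at t)"
    by (intro DERIV_cmult DERIV_diff DERIV_const DERIV_power zt_deriv assms)
  then show ?thesis unfolding usol_def[abs_def] vsol_def by (simp add: algebra_simps)
qed

lemma vsol_deriv: assumes "t \<in> {1 - TT lam s..1}"
  shows "(vsol lam s has_real_derivative - lam * g (usol lam s t)) (at t)"
proof -
  define z where "z = zt lam s t"
  have dz: "(zt lam s has_real_derivative - FF lam s z) (at t)" unfolding z_def by (rule zt_deriv[OF assms])
  have dF: "((\<lambda>t. FF lam s (zt lam s t)) has_real_derivative
      lam * Pd s z / (4 * FF lam s z) * (- FF lam s z)) (at t)"
    unfolding z_def by (rule DERIV_chain2[OF FF_deriv[OF lam s0 s1] zt_deriv[OF assms]])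
  have "((\<lambda>t. (2 * s * zt lam s t) * FF lam s (zt lam s t)) has_real_derivative
      (2 * s * (- FF lam s z)) * FF lam s z + (lam * Pd s z / (4 * FF lam s z) * (- FF lam s z)) * (2 * s * z)) (at t)"
    unfolding z_def
    by (rule DERIV_mult[OF DERIV_cmult[OF dz[unfolded z_def]] dF[unfolded z_def]])
  moreover have "(2 * s * (- FF lam s z)) * FF lam s z + (lam * Pd s z / (4 * FF lam s z) * (- FF lam s z)) * (2 * s * z)
      = - lam * g (usol lam s t)"
  proof -
    have "FF lam s z \<noteq> 0" using FF_pos[OF lam s0 s1, of z] by simp
    then have "(2 * s * (- FF lam s z)) * FF lam s z + (lam * Pd s z / (4 * FF lam s z) * (- FF lam s z)) * (2 * s * z)
       = - 2 * s * (FF lam s z)^2 - lam * s * z * Pd s z / 2"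
      by (simp add: field_simps power2_eq_square)
    also have "\<dots> = - lam * (s * (P s z + z * Pd s z / 2))" unfolding FF_sq[OF lam s0 s1]
      by (simp add: algebra_simps)
    also have "\<dots> = - lam * g (usol lam s t)" unfolding usol_def g_ident z_def ..
    finally show ?thesis .
  qed
  ultimately show ?thesis unfolding vsol_def[abs_def] by simp
qed

lemma T0hat_eq: "T0hat lam s = TT lam s"
  unfolding T0hat_def
proof (rule the_equality)
  let ?T = "TT lam s"
  show "?T > 0 \<and> (\<exists>u v :: real \<Rightarrow> real.
        (\<forall>t\<in>{1-?T..1}. (u has_real_derivative v t) (at t within {1-?T..1}) \<and>
                          (v has_real_derivative (- lam * g (u t))) (at t within {1-?T..1})) \<and>
        u 1 = s \<and> v 1 = 0 \<and>
        u (1 - ?T) = 0 \<and> v (1 - ?T) > 0 \<and>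
        (\<forall>t\<in>{1-?T<..1}. \<not> (u t = 0 \<and> v t > 0)))"
  proof -
    have dU: "\<forall>t\<in>{1-?T..1}. (usol lam s has_real_derivative vsol lam s t) (at t within {1-?T..1}) \<and>
       (vsol lam s has_real_derivative (- lam * g (usol lam s t))) (at t within {1-?T..1})"
      using usol_deriv vsol_deriv has_field_derivative_at_within by blast
    have e1: "usol lam s 1 = s" unfolding usol_def zt_1 by simp
    have e2: "vsol lam s 1 = 0" unfolding vsol_def zt_1 by simp
    have e3: "usol lam s (1 - ?T) = 0" unfolding usol_def zt_end by simp
    have e4: "vsol lam s (1 - ?T) > 0" unfolding vsol_def zt_end using s0 FF_pos[OF lam s0 s1] by simp
    have nh: "\<forall>t\<in>{1-?T<..1}. \<not> (usol lam s t = 0 \<and> vsol lam s t > 0)"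
    proof
      fix t assume t: "t \<in> {1 - ?T<..1}"
      have "zt lam s t < 1" "zt lam s t \<ge> 0" using zt_lt1[OF t] zt_range[of t] t by auto
      then have "(zt lam s t)^2 < 1" by (simp add: power_less_one_iff abs_less_iff)
      then have "usol lam s t > 0" unfolding usol_def using s0 by simp
      then show "\<not> (usol lam s t = 0 \<and> vsol lam s t > 0)" by simp
    qed
    show ?thesis using TT_pos dU e1 e2 e3 e4 nh by blast
  qed
next
  fix tau
  assume H: "tau > 0 \<and> (\<exists>u v :: real \<Rightarrow> real.
        (\<forall>t\<in>{1-tau..1}. (u has_real_derivative v t) (at t within {1-tau..1}) \<and>
                          (v has_real_derivative (- lam * g (u t))) (at t within {1-tau..1})) \<and>
        u 1 = s \<and> v 1 = 0 \<and>
        u (1 - tau) = 0 \<and> v (1 - tau) > 0 \<and>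
        (\<forall>t\<in>{1-tau<..1}. \<not> (u t = 0 \<and> v t > 0)))"
  then obtain u v where tau0: "tau > 0"
    and der: "\<forall>t\<in>{1-tau..1}. (u has_real_derivative v t) (at t within {1-tau..1}) \<and>
                          (v has_real_derivative (- lam * g (u t))) (at t within {1-tau..1})"
    and u1: "u 1 = s" and v1: "v 1 = 0" and ue: "u (1 - tau) = 0" and ve: "v (1 - tau) > 0"
    and nohit: "\<forall>t\<in>{1-tau<..1}. \<not> (u t = 0 \<and> v t > 0)" by blast
  let ?T = "TT lam s"
  define a where "a = max (1 - tau) (1 - ?T)"
  have eq: "\<forall>t\<in>{a..1}. u t = usol lam s t \<and> v t = vsol lam s t"
  proof (rule ode_unique[OF _ lam])
    show "a \<le> 1" unfolding a_def using tau0 TT_pos by simp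
    show "\<forall>t\<in>{a..1}. (u has_real_derivative v t) (at t within {a..1}) \<and>
            (v has_real_derivative (- lam * g (u t))) (at t within {a..1})"
    proof
      fix t assume t: "t \<in> {a..1}"
      then have t': "t \<in> {1-tau..1}" unfolding a_def by auto
      have sub: "{a..1} \<subseteq> {1-tau..1}" unfolding a_def by auto
      show "(u has_real_derivative v t) (at t within {a..1}) \<and>
            (v has_real_derivative (- lam * g (u t))) (at t within {a..1})"
        using der[rule_format, OF t'] DERIV_subset[OF _ sub] by blast
    qed
    show "\<forall>t\<in>{a..1}. (usol lam s has_real_derivative vsol lam s t) (at t within {a..1}) \<and>
            (vsol lam s has_real_derivative (- lam * g (usol lam s t))) (at t within {a..1})"
    proof
      fix t assume t: "t \<in> {a..1}"
      then have t': "t \<in> {1-?T..1}" unfolding a_def by auto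
      show "(usol lam s has_real_derivative vsol lam s t) (at t within {a..1}) \<and>
            (vsol lam s has_real_derivative (- lam * g (usol lam s t))) (at t within {a..1})"
        using usol_deriv[OF t'] vsol_deriv[OF t'] has_field_derivative_at_within by blast
    qed
    show "u 1 = usol lam s 1" unfolding u1 usol_def zt_1 by simp
    show "v 1 = vsol lam s 1" unfolding v1 vsol_def zt_1 by simp
  qed
  show "tau = ?T"
  proof (rule ccontr)
    assume ne: "tau \<noteq> ?T"
    show False
    proof (cases "tau < ?T")
      case True
      then have aa: "a = 1 - tau" unfolding a_def by simp
      have t: "1 - tau \<in> {1 - ?T<..1}" using True tau0 by auto
      have "zt lam s (1 - tau) < 1" "zt lam s (1 - tau) \<ge> 0" using zt_lt1[OF t] zt_range[of "1 - tau"] t by auto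
      then have "(zt lam s (1 - tau))^2 < 1" by (simp add: power_less_one_iff abs_less_iff)
      then have "usol lam s (1 - tau) > 0" unfolding usol_def using s0 by simp
      moreover have "u (1 - tau) = usol lam s (1 - tau)" using eq aa tau0 by auto
      ultimately show False using ue by simp
    next
      case False
      then have gt: "tau > ?T" using ne by simp
      then have aa: "a = 1 - ?T" unfolding a_def by simp
      have "u (1 - ?T) = usol lam s (1 - ?T)" "v (1 - ?T) = vsol lam s (1 - ?T)"
        using eq aa TT_pos by auto
      moreover have "usol lam s (1 - ?T) = 0" unfolding usol_def zt_end by simp
      moreover have "vsol lam s (1 - ?T) > 0" unfolding vsol_def zt_end using s0 FF_pos[OF lam s0 s1] by simp
      moreover have "1 - ?T \<in> {1-tau<..1}" using gt TT_pos by auto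
      ultimately show False using nohit by auto
    qed
  qed
qed

lemma TT_eq: "TT lam s = tauf s / sqrt lam"
proof -
  have int: "ff lam s integrable_on {-1..1}" by (intro integrable_continuous_interval ff_cont[OF lam s0 s1])
  have "integral {-1..0} (ff lam s) + integral {0..1} (ff lam s) = integral {-1..1} (ff lam s)"
    by (rule Henstock_Kurzweil_Integration.integral_combine[OF _ _ int]) auto
  then have "TT lam s = integral {0..1} (ff lam s)" unfolding TT_def Th_def by simp
  also have "\<dots> = integral {0..1} (\<lambda>z. hh s z / sqrt lam)"
  proof -
    have "ff lam s = (\<lambda>z. hh s z / sqrt lam)" by (rule ext) (rule ff_eq[OF lam s0 s1])
    then show ?thesis by simp
  qed
  also have "\<dots> = tauf s / sqrt lam" unfolding tauf_def by simp
  finally show ?thesis .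
qed

end





lemma phi_convex: "convex_on {0<..} (\<lambda>p::real. p powr (-1/2))"
proof (rule f''_ge0_imp_convex[where f'="\<lambda>p. (-1/2) * p powr (-1/2 - 1)" and f''="\<lambda>p. (-1/2) * ((-1/2 - 1) * p powr (-1/2 - 1 - 1))"])
  show "convex {0::real<..}" by simp
  fix x :: real assume x: "x \<in> {0<..}"
  then show "((\<lambda>p. p powr (-1/2)) has_real_derivative (-1/2) * x powr (-1/2 - 1)) (at x)"
    using has_real_derivative_powr[of x "-1/2"] by simp
  show "((\<lambda>p. (-1/2) * p powr (-1/2 - 1)) has_real_derivative (-1/2) * ((-1/2 - 1) * x powr (-1/2 - 1 - 1))) (at x)"
    using DERIV_cmult[OF has_real_derivative_powr[of x "-1/2 - 1"], of "-1/2"] x by (simp add: mult.assoc)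
  show "0 \<le> (-1/2) * ((-1/2 - 1) * x powr (-1/2 - 1 - 1))" by simp
qed

lemma phi_eq: "p > 0 \<Longrightarrow> p powr (-1/2) = 1 / sqrt p"
  by (simp add: powr_minus_divide powr_half_sqrt)

lemma bb_pos: "0 \<le> x \<Longrightarrow> bb x > 0"
  unfolding bb_def by (simp add: add_pos_nonneg)

lemma bb_le1: "0 \<le> x \<Longrightarrow> x \<le> 1 \<Longrightarrow> bb x \<le> 1"
proof -
  assume x: "0 \<le> x" "x \<le> 1"
  have "x^2 \<le> 1" "x^3 \<le> 1" using x by (simp_all add: power_le_one)
  then show ?thesis unfolding bb_def using x by simp
qed

lemma aa_le1: "0 \<le> x \<Longrightarrow> x \<le> 1 \<Longrightarrow> aa x \<le> 1"
proof -
  assume x: "0 \<le> x" "x \<le> 1"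
  have "x^2 \<le> 1" using x by (simp_all add: power_le_one)
  then show ?thesis unfolding aa_def using x by simp
qed

context
  fixes s :: real
  assumes s0: "0 < s" and s1: "s < 1"
begin

lemma hh_cont: "continuous_on S (hh s)"
proof -
  have nz: "\<And>z. sqrt (P s z) \<noteq> 0" using P_pos[OF s0 s1] by (metis less_irrefl real_sqrt_gt_zero)
  show ?thesis unfolding hh_def[abs_def] by (intro continuous_intros P_cont) (use nz in auto)
qed

lemma hh_int: "hh s integrable_on {0..1}"
  by (intro integrable_continuous_interval hh_cont)

lemma tauf_lower0: "tauf s \<ge> sqrt 2 / sqrt s"
proof -
  have "integral {0..1} (\<lambda>z::real. sqrt 2 / sqrt s) \<le> integral {0..1} (hh s)"
  proof (rule Henstock_Kurzweil_Integration.integral_le)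
    show "(\<lambda>z::real. sqrt 2 / sqrt s) integrable_on {0..1}" by (intro integrable_continuous_interval continuous_intros)
    show "hh s integrable_on {0..1}" by (rule hh_int)
    fix z :: real assume z: "z \<in> {0..1}"
    define x where "x = 1 - z^2"
    have x: "0 \<le> x" "x \<le> 1" unfolding x_def using z by (auto simp: power_le_one)
    have "s * aa x \<le> s" using aa_le1[OF x] s0 by (simp add: mult_left_le)
    moreover have "s^2 * bb x \<ge> 0" using bb_pos[OF x(1)] by simp
    ultimately have "P s z \<le> s" unfolding P_def x_def[symmetric] by linarith
    then have "sqrt (P s z) \<le> sqrt s" by simp
    then show "sqrt 2 / sqrt s \<le> hh s z" unfolding hh_def
      using P_pos[OF s0 s1, of z] by (intro divide_left_mono) auto
  qed
  then show ?thesis unfolding tauf_def by simp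
qed

lemma tauf_lower1: "tauf s \<ge> - 2 * ln (sqrt (2 * (1 - s)))"
proof -
  define d where "d = sqrt (2 * (1 - s))"
  have d0: "d > 0" unfolding d_def using s1 by simp
  have d2: "d^2 = 2 * (1 - s)" unfolding d_def using s1 by simp
  have fi: "((\<lambda>z. 2 / (z + d)) has_integral (2 * ln (1 + d) - 2 * ln (0 + d))) {0..1}"
  proof (rule fundamental_theorem_of_calculus[where f="\<lambda>z. 2 * ln (z + d)"])
    fix z :: real assume "z \<in> {0..1}"
    then have "z + d > 0" using d0 by auto
    then show "((\<lambda>z. 2 * ln (z + d)) has_vector_derivative 2 / (z + d)) (at z within {0..1})"
      unfolding has_real_derivative_iff_has_vector_derivative[symmetric]
      by (auto intro!: derivative_eq_intros simp: field_simps)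
  qed simp
  have "2 * ln (1 + d) - 2 * ln d \<le> integral {0..1} (hh s)"
  proof -
    have "integral {0..1} (\<lambda>z. 2 / (z + d)) \<le> integral {0..1} (hh s)"
    proof (rule Henstock_Kurzweil_Integration.integral_le[OF _ hh_int])
      show "(\<lambda>z. 2 / (z + d)) integrable_on {0..1}" using fi by blast
      fix z :: real assume z: "z \<in> {0..1}"
      define x where "x = 1 - z^2"
      have x: "0 \<le> x" "x \<le> 1" unfolding x_def using z by (auto simp: power_le_one)
      have "x^2 \<le> 1" using x by (simp add: power_le_one)
      then have q: "3 * x^2 + 2 * x + 1 \<le> 6" using x by linarith
      have "aa x - bb x = z^2 * (3 * x^2 + 2 * x + 1) / 12" unfolding aa_bb x_def by simp
      also have "\<dots> \<le> z^2 * 6 / 12" using q by (intro divide_right_mono mult_left_mono) auto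
      finally have ab: "aa x - bb x \<le> z^2 / 2" by simp
      have pos: "aa x - s * bb x > 0" using P_pos[OF s0 s1, of z] s0 unfolding P_def x_def[symmetric]
        by (metis mult_pos_pos power2_eq_square right_diff_distrib zero_less_mult_pos mult.assoc)
      have "P s z = s * (aa x - s * bb x)" unfolding P_def x_def by (simp add: power2_eq_square algebra_simps)
      also have "\<dots> \<le> aa x - s * bb x" using pos s1 by (simp add: mult_le_cancel_right1 less_imp_le)
      also have "\<dots> = (aa x - bb x) + (1 - s) * bb x" by (simp add: algebra_simps)
      also have "\<dots> \<le> z^2 / 2 + (1 - s)"
      proof -
        have "(1 - s) * bb x \<le> (1 - s)" using mult_left_le[OF bb_le1[OF x], of "1 - s"] s1 by simp
        then show ?thesis using ab by linarith
      qed
      also have "\<dots> \<le> (z + d)^2 / 2"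
      proof -
        have e: "(z + d)^2 / 2 = z^2/2 + z*d + d^2/2" by (simp add: power2_eq_square field_simps)
        have "z * d \<ge> 0" using z d0 by simp
        moreover have "2 * (1 - s) / 2 = 1 - s" by simp
        ultimately show ?thesis unfolding e d2 by linarith
      qed
      finally have "P s z \<le> (z + d)^2 / 2" .
      then have "sqrt (P s z) \<le> sqrt ((z + d)^2 / 2)" by simp
      also have "\<dots> = (z + d) / sqrt 2" using z d0 by (simp add: real_sqrt_divide)
      finally have sq: "sqrt (P s z) \<le> (z + d) / sqrt 2" .
      have "2 / (z + d) = sqrt 2 / ((z + d) / sqrt 2)" by (simp add: field_simps)
      also have "\<dots> \<le> sqrt 2 / sqrt (P s z)"
      proof (rule divide_left_mono)
        show "sqrt (P s z) \<le> (z + d) / sqrt 2" by (rule sq)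
        show "0 \<le> sqrt 2" by simp
        have "z + d > 0" using z d0 by simp
        then show "0 < (z + d) / sqrt 2 * sqrt (P s z)" using P_pos[OF s0 s1, of z] by simp
      qed
      finally show "2 / (z + d) \<le> hh s z" unfolding hh_def .
    qed
    then show ?thesis using integral_unique[OF fi] by simp
  qed
  moreover have "ln (1 + d) \<ge> 0" using d0 by simp
  ultimately show ?thesis unfolding tauf_def d_def by linarith
qed

end

lemma tauf_unb0: "\<exists>a>0. a < 1 \<and> (\<forall>s. 0 < s \<and> s < a \<longrightarrow> tauf s > c)"
proof -
  define a where "a = 1 / (c^2 + 2)"
  have a0: "a > 0" "a < 1" unfolding a_def by (auto simp: field_simps add_pos_nonneg)
  have "tauf s > c" if s: "0 < s" "s < a" for s
  proof -
    have "c^2 \<ge> 0" by simp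
    then have k: "c^2 + 2 > 0" by linarith
    have "s * (c^2 + 2) < 1" using s(2) pos_less_divide_eq[OF k, of s 1] unfolding a_def by simp
    then have "s * (c^2 + 2) < 2" by simp
    then have "c^2 < 2 / s" using s by (simp add: pos_less_divide_eq algebra_simps)
    then have "sqrt (c^2) < sqrt (2 / s)" by (simp del: real_sqrt_abs)
    then have "c < sqrt 2 / sqrt s" by (simp add: real_sqrt_divide)
    also have "\<dots> \<le> tauf s" using tauf_lower0 s a0 by simp
    finally show ?thesis .
  qed
  then show ?thesis using a0 by blast
qed

lemma tauf_unb1: "\<exists>b>0. b < 1 \<and> (\<forall>s. b < s \<and> s < 1 \<longrightarrow> tauf s > c)"
proof -
  define b where "b = max (1/2) (1 - exp (- c) / 2)"
  have b0: "b > 0" "b < 1" unfolding b_def by auto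
  have "tauf s > c" if s: "b < s" "s < 1" for s
  proof -
    have s0: "0 < s" using s b0 by simp
    have "2 * (1 - s) < exp (- c)" using s unfolding b_def by auto
    then have "ln (2 * (1 - s)) < - c" using s by (metis exp_less_cancel_iff exp_ln diff_gt_0_iff_gt mult_pos_pos zero_less_numeral)
    moreover have "ln (sqrt (2 * (1 - s))) = ln (2 * (1 - s)) / 2" using s by (simp add: ln_sqrt)
    ultimately have "c < - 2 * ln (sqrt (2 * (1 - s)))" by simp
    also have "\<dots> \<le> tauf s" using tauf_lower1[OF s0 s(2)] .
    finally show ?thesis .
  qed
  then show ?thesis using b0 by blast
qed

lemma tauf_strict: assumes "0 < x" "x < y" "y < 1" "0 < t" "t < 1"
  shows "tauf ((1 - t) * x + t * y) < (1 - t) * tauf x + t * tauf y"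
proof -
  define m where "m = (1 - t) * x + t * y"
  have m: "0 < m" "m < 1"
  proof -
    have "(1 - t) * x \<ge> 0" "t * y > 0" using assms by simp_all
    have "(1 - t) * x \<le> (1 - t)" using assms mult_left_le[of x "1 - t"] by simp
    have "t * y < t" using mult_strict_left_mono[of y 1 t] assms by simp
    note this \<open>(1 - t) * x \<le> (1 - t)\<close> \<open>(1 - t) * x \<ge> 0\<close> \<open>t * y > 0\<close>
    then show "0 < m" "m < 1" unfolding m_def by linarith+
  qed
  have "integral {0..1} (hh m) < integral {0..1} (\<lambda>z. (1 - t) * hh x z + t * hh y z)"
  proof (rule integral_less_real)
    show "continuous_on {0..1} (hh m)" using hh_cont m by simp
    show "continuous_on {0..1} (\<lambda>z. (1 - t) * hh x z + t * hh y z)"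
      using hh_cont assms by (intro continuous_intros) auto
    show "{0::real<..<1} \<noteq> {}" by simp
    fix z :: real assume z: "z \<in> {0<..<1}"
    define w where "w = 1 - z^2"
    have w: "0 \<le> w" using z unfolding w_def by (auto simp: power_le_one)
    have Px: "P x z > 0" and Py: "P y z > 0" and Pm: "P m z > 0"
      using P_pos assms m by auto
    have "P m z - ((1 - t) * P x z + t * P y z) = t * (1 - t) * (x - y)^2 * bb w"
      unfolding P_def m_def w_def[symmetric] by (simp add: power2_eq_square algebra_simps)
    moreover have "t * (1 - t) * (x - y)^2 * bb w > 0" using assms bb_pos[OF w] by simp
    ultimately have lt: "(1 - t) * P x z + t * P y z < P m z" by simp
    have cpos: "(1 - t) * P x z + t * P y z > 0" using Px Py assms
      by (intro add_pos_pos mult_pos_pos) auto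
    have "1 / sqrt (P m z) < 1 / sqrt ((1 - t) * P x z + t * P y z)"
      using lt cpos by (simp add: divide_strict_left_mono)
    also have "\<dots> = ((1 - t) * P x z + t * P y z) powr (-1/2)" by (rule phi_eq[OF cpos, symmetric])
    also have "\<dots> \<le> (1 - t) * (P x z) powr (-1/2) + t * (P y z) powr (-1/2)"
      using convex_onD[OF phi_convex, of t "P x z" "P y z"] assms Px Py by simp
    also have "\<dots> = (1 - t) * (1 / sqrt (P x z)) + t * (1 / sqrt (P y z))" by (simp only: phi_eq[OF Px] phi_eq[OF Py])
    finally have "1 / sqrt (P m z) < (1 - t) * (1 / sqrt (P x z)) + t * (1 / sqrt (P y z))" .
    then have "sqrt 2 * (1 / sqrt (P m z)) < sqrt 2 * ((1 - t) * (1 / sqrt (P x z)) + t * (1 / sqrt (P y z)))"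
      by (rule mult_strict_left_mono) simp
    then show "hh m z < (1 - t) * hh x z + t * hh y z" unfolding hh_def by (simp add: algebra_simps)
  qed
  also have "\<dots> = (1 - t) * integral {0..1} (hh x) + t * integral {0..1} (hh y)"
    using hh_int assms by (simp add: integral_add)
  finally show ?thesis unfolding tauf_def m_def .
qed




lemma unimodal:
  fixes f :: "real \<Rightarrow> real"
  assumes strict: "\<And>x y t. 0 < x \<Longrightarrow> x < y \<Longrightarrow> y < 1 \<Longrightarrow> 0 < t \<Longrightarrow> t < 1 \<Longrightarrow>
      f ((1 - t) * x + t * y) < (1 - t) * f x + t * f y"
  and unb0: "\<And>c. \<exists>a>0. a < 1 \<and> (\<forall>s. 0 < s \<and> s < a \<longrightarrow> f s > c)"
  and unb1: "\<And>c. \<exists>b>0. b < 1 \<and> (\<forall>s. b < s \<and> s < 1 \<longrightarrow> f s > c)"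
  shows "\<exists>ss. 0 < ss \<and> ss < 1 \<and> continuous_on {0<..<1} f \<and>
     (\<forall>x. 0 < x \<and> x < 1 \<and> x \<noteq> ss \<longrightarrow> f x > f ss) \<and>
     (\<forall>x y. 0 < x \<and> x < y \<and> y \<le> ss \<longrightarrow> f y < f x) \<and>
     (\<forall>x y. ss \<le> x \<and> x < y \<and> y < 1 \<longrightarrow> f x < f y)"
proof -
  have cvx: "convex_on {0<..<1} f"
  proof (rule convex_on_linorderI)
    fix t x y :: real assume "0 < t" "t < 1" "x \<in> {0<..<1}" "y \<in> {0<..<1}" "x < y"
    then show "f ((1 - t) *\<^sub>R x + t *\<^sub>R y) \<le> (1 - t) * f x + t * f y"
      using strict[of x y t] by simp
  qed simp
  have cont: "continuous_on {0<..<1} f"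
    by (rule convex_on_continuous[OF _ cvx]) simp
  obtain a where a: "a > 0" "a < 1" "\<forall>s. 0 < s \<and> s < a \<longrightarrow> f s > f (1/2)" using unb0 by blast
  obtain b where b: "b > 0" "b < 1" "\<forall>s. b < s \<and> s < 1 \<longrightarrow> f s > f (1/2)" using unb1 by blast
  define a' where "a' = min a (1/2)"
  define b' where "b' = max b (1/2)"
  have sub: "{a'..b'} \<subseteq> {0<..<1}" unfolding a'_def b'_def using a b by auto
  have ne: "{a'..b'} \<noteq> {}" unfolding a'_def b'_def by auto
  obtain ss where ss: "ss \<in> {a'..b'}" "\<forall>y\<in>{a'..b'}. f ss \<le> f y"
    using continuous_attains_inf[OF compact_Icc ne continuous_on_subset[OF cont sub]] by blast
  have ss01: "0 < ss" "ss < 1" using ss(1) sub by auto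
  have half: "1/2 \<in> {a'..b'}" unfolding a'_def b'_def by auto
  have gmin: "f ss \<le> f x" if x: "0 < x" "x < 1" for x
  proof (cases "x \<in> {a'..b'}")
    case True then show ?thesis using ss by auto
  next
    case False
    then have "x < a \<or> x > b" unfolding a'_def b'_def using x by auto
    then have "f x > f (1/2)" using a b x by auto
    moreover have "f ss \<le> f (1/2)" using ss half by auto
    ultimately show ?thesis by simp
  qed
  have smin: "f x > f ss" if x: "0 < x" "x < 1" "x \<noteq> ss" for x
  proof (rule ccontr)
    assume "\<not> f x > f ss"
    then have eq: "f x = f ss" using gmin[OF x(1,2)] by simp
    define m where "m = (1 - 1/2) * min x ss + 1/2 * max x ss"
    have "f m < (1 - 1/2) * f (min x ss) + 1/2 * f (max x ss)"
      unfolding m_def using x ss01 by (intro strict) (auto simp: min_def max_def)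
    also have "\<dots> = f ss" using eq by (simp add: min_def max_def)
    finally have "f m < f ss" .
    moreover have "0 < m" "m < 1" unfolding m_def using x ss01 by (auto simp: min_def max_def)
    ultimately show False using gmin by fastforce
  qed
  have dec: "f y < f x" if xy: "0 < x" "x < y" "y \<le> ss" for x y
  proof (cases "y = ss")
    case True then show ?thesis using smin[of x] xy ss01 by auto
  next
    case False
    then have y: "y < ss" using xy by simp
    define t where "t = (y - x) / (ss - x)"
    have t: "0 < t" "t < 1" unfolding t_def using xy y by auto
    have "t * (ss - x) = y - x" unfolding t_def using xy y by simp
    then have ye: "y = (1 - t) * x + t * ss" by (simp add: algebra_simps)
    have "f y < (1 - t) * f x + t * f ss" unfolding ye using xy y t ss01 by (intro strict) auto
    also have "\<dots> \<le> (1 - t) * f x + t * f x" using gmin[of x] xy ss01 t by (intro add_left_mono mult_left_mono) auto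
    finally show ?thesis by (simp add: algebra_simps)
  qed
  have inc: "f x < f y" if xy: "ss \<le> x" "x < y" "y < 1" for x y
  proof (cases "x = ss")
    case True then show ?thesis using smin[of y] xy ss01 by auto
  next
    case False
    then have x: "ss < x" using xy by simp
    define t where "t = (x - ss) / (y - ss)"
    have t: "0 < t" "t < 1" unfolding t_def using xy x by auto
    have "t * (y - ss) = x - ss" unfolding t_def using xy x by simp
    then have xe: "x = (1 - t) * ss + t * y" by (simp add: algebra_simps)
    have "f x < (1 - t) * f ss + t * f y" unfolding xe using xy x t ss01 by (intro strict) auto
    also have "\<dots> \<le> (1 - t) * f y + t * f y" using gmin[of y] xy x ss01 t by (intro add_right_mono mult_left_mono) auto
    finally show ?thesis by (simp add: algebra_simps)
  qed
  show ?thesis using ss01 cont smin dec inc by blast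
qed

lemma tauf_props: "\<exists>ss. 0 < ss \<and> ss < 1 \<and> continuous_on {0<..<1} tauf \<and>
     (\<forall>x. 0 < x \<and> x < 1 \<and> x \<noteq> ss \<longrightarrow> tauf x > tauf ss) \<and>
     (\<forall>x y. 0 < x \<and> x < y \<and> y \<le> ss \<longrightarrow> tauf y < tauf x) \<and>
     (\<forall>x y. ss \<le> x \<and> x < y \<and> y < 1 \<longrightarrow> tauf x < tauf y)"
proof (rule unimodal)
  fix x y t :: real assume "0 < x" "x < y" "y < 1" "0 < t" "t < 1"
  then show "tauf ((1 - t) * x + t * y) < (1 - t) * tauf x + t * tauf y" by (rule tauf_strict)
next
  fix c show "\<exists>a>0. a < 1 \<and> (\<forall>s. 0 < s \<and> s < a \<longrightarrow> tauf s > c)" by (rule tauf_unb0)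
next
  fix c show "\<exists>b>0. b < 1 \<and> (\<forall>s. b < s \<and> s < 1 \<longrightarrow> tauf s > c)" by (rule tauf_unb1)
qed

lemma I1_char: assumes "lam > 0"
  shows "I1 sg lam = {s \<in> {0<..<1}. tauf s > sg * sqrt lam}"
proof -
  have "T0hat lam s > sg \<longleftrightarrow> tauf s > sg * sqrt lam" if "s \<in> {0<..<1}" for s
    using T0hat_eq[OF assms, of s] TT_eq[OF assms, of s] that assms
    by (simp add: pos_less_divide_eq)
  then show ?thesis unfolding I1_def by auto
qed

theorem proposition2p3:
  fixes sg :: real
  assumes "0 < sg" and "sg < 1/2"
  shows "\<exists>lamstar > 0. \<exists>sstar. 0 < sstar \<and> sstar < 1 \<and>
           (\<forall>lam. 0 < lam \<and> lam < lamstar \<longrightarrow> I1 sg lam = {0<..<1}) \<and>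
           I1 sg lamstar = {0<..<1} - {sstar} \<and>
           (\<forall>lam > lamstar. \<exists>s0 s1. 0 < s0 \<and> s0 < sstar \<and> sstar < s1 \<and> s1 < 1 \<and>
              I1 sg lam = {0<..<s0} \<union> {s1<..<1})"
proof -
  obtain ss where ss: "0 < ss" "ss < 1" and cont: "continuous_on {0<..<1} tauf"
    and smin: "\<forall>x. 0 < x \<and> x < 1 \<and> x \<noteq> ss \<longrightarrow> tauf x > tauf ss"
    and dec: "\<forall>x y. 0 < x \<and> x < y \<and> y \<le> ss \<longrightarrow> tauf y < tauf x"
    and inc: "\<forall>x y. ss \<le> x \<and> x < y \<and> y < 1 \<longrightarrow> tauf x < tauf y"
    using tauf_props by blast
  define m where "m = tauf ss"
  have m0: "m > 0" unfolding m_def using tauf_lower0[OF ss] ss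
    by (smt (verit) divide_pos_pos real_sqrt_gt_zero zero_less_numeral)
  define ls where "ls = (m / sg)^2"
  have ls0: "ls > 0" unfolding ls_def using m0 assms by simp
  have sqls: "sqrt ls = m / sg" unfolding ls_def using m0 assms by simp
  have gm: "tauf x \<ge> m" if "0 < x" "x < 1" for x
    using smin that unfolding m_def by (cases "x = ss") (auto intro: less_imp_le)
  have P1: "\<forall>lam. 0 < lam \<and> lam < ls \<longrightarrow> I1 sg lam = {0<..<1}"
  proof (intro allI impI)
    fix lam assume lam: "0 < lam \<and> lam < ls"
    then have "sqrt lam < m / sg" using sqls by (metis real_sqrt_less_iff)
    then have "sg * sqrt lam < m" using assms by (simp add: pos_less_divide_eq mult.commute)
    then show "I1 sg lam = {0<..<1}" unfolding I1_char[OF conjunct1[OF lam]]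
      using gm by (auto intro: less_le_trans)
  qed
  have P2: "I1 sg ls = {0<..<1} - {ss}"
  proof -
    have "sg * sqrt ls = m" unfolding sqls using assms by simp
    then show "I1 sg ls = {0<..<1} - {ss}" unfolding I1_char[OF ls0]
      using smin unfolding m_def by auto
  qed
  have P3: "\<forall>lam > ls. \<exists>s0 s1. 0 < s0 \<and> s0 < ss \<and> ss < s1 \<and> s1 < 1 \<and>
              I1 sg lam = {0<..<s0} \<union> {s1<..<1}"
  proof (intro allI impI)
    fix lam assume lam: "lam > ls"
    define c where "c = sg * sqrt lam"
    have "sqrt lam > m / sg" using sqls lam by (metis real_sqrt_less_iff)
    then have cm: "c > m" unfolding c_def using assms by (simp add: pos_divide_less_eq mult.commute)
    obtain a where a: "a > 0" "a < 1" "\<forall>s. 0 < s \<and> s < a \<longrightarrow> tauf s > c" using tauf_unb0 by blast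
    obtain b where b: "b > 0" "b < 1" "\<forall>s. b < s \<and> s < 1 \<longrightarrow> tauf s > c" using tauf_unb1 by blast
    define p where "p = min (a/2) (ss/2)"
    have p: "0 < p" "p < ss" "p < a" unfolding p_def using a ss by auto
    have fp: "tauf p > c" using a p by auto
    have subp: "{p..ss} \<subseteq> {0<..<1}" using p ss by auto
    obtain s0 where s0: "p \<le> s0" "s0 \<le> ss" "tauf s0 = c"
      using IVT2'[of tauf ss c p] fp cm p continuous_on_subset[OF cont subp] ss
      unfolding m_def by auto
    have "s0 \<noteq> ss" using s0(3) cm unfolding m_def by auto
    then have s0': "0 < s0" "s0 < ss" using s0 p by auto
    define q where "q = max ((b + 1)/2) ((ss + 1)/2)"
    have q: "ss < q" "q < 1" "b < q" unfolding q_def using b ss by (auto simp: less_max_iff_disj)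
    have fq: "tauf q > c" using b q by auto
    have subq: "{ss..q} \<subseteq> {0<..<1}" using q ss by auto
    obtain s1 where s1: "ss \<le> s1" "s1 \<le> q" "tauf s1 = c"
      using IVT'[of tauf ss c q] fq cm q continuous_on_subset[OF cont subq] ss
      unfolding m_def by auto
    have "s1 \<noteq> ss" using s1(3) cm unfolding m_def by auto
    then have s1': "ss < s1" "s1 < 1" using s1 q by auto
    have "I1 sg lam = {0<..<s0} \<union> {s1<..<1}"
    proof -
      have "tauf s > c \<longleftrightarrow> s < s0 \<or> s1 < s" if s: "0 < s" "s < 1" for s
      proof (cases "s \<le> ss")
        case True
        have "s < s0 \<Longrightarrow> tauf s > c" using dec s0 s0' s by auto
        moreover have "s0 \<le> s \<Longrightarrow> tauf s \<le> c" using dec s0 s0' s True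
          by (cases "s = s0") (auto intro: less_imp_le)
        ultimately show ?thesis using True s1' by force
      next
        case False
        have "s1 < s \<Longrightarrow> tauf s > c" using inc s1 s1' s by auto
        moreover have "s \<le> s1 \<Longrightarrow> tauf s \<le> c" using inc s1 s1' s False
          by (cases "s = s1") (auto intro: less_imp_le)
        ultimately show ?thesis using False s0' by force
      qed
      then show ?thesis unfolding I1_char[OF less_trans[OF ls0 lam]] c_def[symmetric]
        using s0' s1' by auto
    qed
    then show "\<exists>s0 s1. 0 < s0 \<and> s0 < ss \<and> ss < s1 \<and> s1 < 1 \<and> I1 sg lam = {0<..<s0} \<union> {s1<..<1}"
      using s0' s1' by blast
  qed
  show ?thesis using ls0 ss P1 P2 P3 by blast
qed


end
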